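(* Let $\mathfrak{H}$ be a Euclidean space and let $(\mathcal{X},\mathsf{S},\gamma,(\Lambda_{a})_{a\in\mathcal{A}})$ be a spectral decomposition system for $\mathfrak{H}$ such that the set $\{\Lambda_a\}_{a\in\mathcal{A}}$ is closed in $\mathscr{L}(\mathcal{X},\mathfrak{H})$. Let $\varphi\colon\mathcal{X}\to[-\infty,+\infty]$ be $\mathsf{S}$-invariant. (i) Let $x\in\mathcal{X}$ and $a\in\mathcal{A}$, and suppose $\varphi(x)\in\mathbb{R}$. Then $\varphi\circ\gamma$ is Fréchet differentiable at $\Lambda_a x$ if and only if $\varphi$ is Fréchet differentiable at $x$, in which case $\nabla(\varphi\circ\gamma)(\Lambda_a x)=\Lambda_a(\nabla\varphi(x))$. (ii) Let $X\in\mathfrak{H}$ and suppose $\varphi(\gamma(X))\in\mathbb{R}$. Then $\varphi\circ\gamma$ is Fréchet differentiable at $X$ if and only if $\varphi$ is Fréchet differentiable at $\gamma(X)$, in which case $\nabla(\varphi\circ\gamma)(X)=\Lambda_a(\nabla\varphi(\gamma(X)))$ for every $a\in\mathcal{A}_X$.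
   Context: A Euclidean space is a finite-dimensional real Hilbert space; $\mathscr{L}(\mathcal{X},\mathfrak{H})$ carries the operator-norm topology. A spectral decomposition system for a Euclidean space $\mathfrak{H}$ is a tuple $(\mathcal{X},\mathsf{S},\gamma,(\Lambda_a)_{a\in\mathcal{A}})$ where $\mathcal{X}$ is a Euclidean space, $\mathsf{S}$ is a group acting on $\mathcal{X}$ such that each map $x\mapsto \mathsf{s}\cdot x$ is a linear isometry, $\gamma\colon\mathfrak{H}\to\mathcal{X}$ is a mapping, and each $\Lambda_a\colon\mathcal{X}\to\mathfrak{H}$ is a linear isometry, such that: [A] there exists a mapping $\tau\colon\mathcal{X}\to\mathcal{X}$ with $\tau(\mathsf{s}\cdot x)=\tau(x)$ for all $\mathsf{s},x$, $\tau(x)\in\mathsf{S}\cdot x$ for all $x$, and $\gamma\circ\Lambda_a=\tau$ for all $a\in\mathcal{A}$; [B] for every $X\in\mathfrak{H}$ there exists $a\in\mathcal{A}$ with $X=\Lambda_a\gamma(X)$; [C] $\langle X,Y\rangle\le\langle\gamma(X),\gamma(Y)\rangle$ for all $X,Y\in\mathfrak{H}$. $\mathcal{A}_X=\{a\in\mathcal{A}:X=\Lambda_a\gamma(X)\}$. A function $\varphi$ on $\mathcal{X}$ is $\mathsf{S}$-invariant if $\varphi(\mathsf{s}\cdot x)=\varphi(x)$ for all $\mathsf{s},x$. A function $f$ with $f(x)\in\mathbb{R}$ is Fréchet differentiable at $x$ if there is a (unique) $\nabla f(x)$ with $\lim_{z\to x,z\ne x}|f(z)-f(x)-\langle z-x,\nabla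 f(x)\rangle|/\|z-x\|=0$. *)

theory Defs
  imports "HOL-Analysis.Analysis" "HOL-Algebra.Group"
begin

definition lin_isometry :: "('a::real_normed_vector \<Rightarrow> 'b::real_normed_vector) \<Rightarrow> bool" where
  "lin_isometry f \<longleftrightarrow> linear f \<and> (\<forall>x. norm (f x) = norm x)"

definition spectral_decomposition_system ::
  "('s, 'm) monoid_scheme \<Rightarrow> ('s \<Rightarrow> 'x::euclidean_space \<Rightarrow> 'x) \<Rightarrow> ('h::euclidean_space \<Rightarrow> 'x)
     \<Rightarrow> ('i \<Rightarrow> 'x \<Rightarrow> 'h) \<Rightarrow> 'i set \<Rightarrow> bool" where
  "spectral_decomposition_system G act gamma Lambda A \<longleftrightarrow>
     group G \<and>
     (\<forall>x. act \<one>\<^bsub>G\<^esub> x = x) \<and>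
     (\<forall>g\<in>carrier G. \<forall>h\<in>carrier G. \<forall>x. act (g \<otimes>\<^bsub>G\<^esub> h) x = act g (act h x)) \<and>
     (\<forall>g\<in>carrier G. lin_isometry (act g)) \<and>
     (\<forall>a\<in>A. lin_isometry (Lambda a)) \<and>
     (\<exists>\<tau>::'x \<Rightarrow> 'x.
        (\<forall>g\<in>carrier G. \<forall>x. \<tau> (act g x) = \<tau> x) \<and>
        (\<forall>x. \<tau> x \<in> {act g x | g. g \<in> carrier G}) \<and>
        (\<forall>a\<in>A. \<forall>x. gamma (Lambda a x) = \<tau> x)) \<and>
     (\<forall>X. \<exists>a\<in>A. X = Lambda a (gamma X)) \<and>
     (\<forall>X Y. inner X Y \<le> inner (gamma X) (gamma Y))"

definition spectral_index_set ::
  "('h \<Rightarrow> 'x) \<Rightarrow> ('i \<Rightarrow> 'x \<Rightarrow> 'h) \<Rightarrow> 'i set \<Rightarrow> 'h \<Rightarrow> 'i set" where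
  "spectral_index_set gamma Lambda A X = {a\<in>A. X = Lambda a (gamma X)}"

definition S_invariant :: "('s, 'm) monoid_scheme \<Rightarrow> ('s \<Rightarrow> 'x \<Rightarrow> 'x) \<Rightarrow> ('x \<Rightarrow> 'b) \<Rightarrow> bool" where
  "S_invariant G act \<phi> \<longleftrightarrow> (\<forall>g\<in>carrier G. \<forall>x. \<phi> (act g x) = \<phi> x)"

definition has_frechet_gradient :: "('a::real_inner \<Rightarrow> ereal) \<Rightarrow> 'a \<Rightarrow> 'a \<Rightarrow> bool" where
  "has_frechet_gradient f x g \<longleftrightarrow> \<bar>f x\<bar> \<noteq> \<infinity> \<and>
     ((\<lambda>z. \<bar>f z - f x - ereal (inner (z - x) g)\<bar> / ereal (norm (z - x))) \<longlongrightarrow> 0) (at x)"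

definition frechet_differentiable :: "('a::real_inner \<Rightarrow> ereal) \<Rightarrow> 'a \<Rightarrow> bool" where
  "frechet_differentiable f x \<longleftrightarrow> (\<exists>g. has_frechet_gradient f x g)"

definition frechet_gradient :: "('a::real_inner \<Rightarrow> ereal) \<Rightarrow> 'a \<Rightarrow> 'a" where
  "frechet_gradient f x = (THE g. has_frechet_gradient f x g)"

end

theory Submission
  imports Defs
begin


definition FG :: "('a::real_inner \<Rightarrow> ereal) \<Rightarrow> 'a \<Rightarrow> 'a \<Rightarrow> bool" where
  "FG f x g \<longleftrightarrow> \<bar>f x\<bar> \<noteq> \<infinity> \<and>
     (\<forall>\<theta>>0. \<exists>d>0. \<forall>z. norm (z - x) < d \<longrightarrow> \<bar>f z\<bar> \<noteq> \<infinity> \<and>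
        \<bar>real_of_ereal (f z) - real_of_ereal (f x) - inner (z - x) g\<bar> \<le> \<theta> * norm (z - x))"

lemma hfg_imp_FG:
  assumes "has_frechet_gradient f x g" shows "FG f x g"
proof -
  from assms have fx: "\<bar>f x\<bar> \<noteq> \<infinity>" and lim: "((\<lambda>z. \<bar>f z - f x - ereal (inner (z - x) g)\<bar> / ereal (norm (z - x))) \<longlongrightarrow> 0) (at x)"
    unfolding has_frechet_gradient_def by auto
  obtain r where r: "f x = ereal r" using fx by (cases "f x") auto
  show ?thesis unfolding FG_def
  proof (intro conjI fx allI impI)
    fix \<theta> :: real assume th: "\<theta> > 0"
    have "\<forall>\<^sub>F z in at x. \<bar>f z - f x - ereal (inner (z - x) g)\<bar> / ereal (norm (z - x)) < ereal \<theta>"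
      using order_tendstoD(2)[OF lim] th by auto
    then obtain d where d: "d > 0" and dd: "\<And>z. z \<noteq> x \<Longrightarrow> dist z x < d \<Longrightarrow> \<bar>f z - f x - ereal (inner (z - x) g)\<bar> / ereal (norm (z - x)) < ereal \<theta>"
      unfolding eventually_at by auto
    show "\<exists>d>0. \<forall>z. norm (z - x) < d \<longrightarrow> \<bar>f z\<bar> \<noteq> \<infinity> \<and> \<bar>real_of_ereal (f z) - real_of_ereal (f x) - inner (z - x) g\<bar> \<le> \<theta> * norm (z - x)"
    proof (rule exI[of _ d], rule conjI[OF d], intro allI impI)
      fix z assume zn: "norm (z - x) < d"
      show "\<bar>f z\<bar> \<noteq> \<infinity> \<and> \<bar>real_of_ereal (f z) - real_of_ereal (f x) - inner (z - x) g\<bar> \<le> \<theta> * norm (z - x)"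
      proof (cases "z = x")
        case True thus ?thesis using fx r by simp
      next
        case False
        hence n: "norm (z - x) > 0" by simp
        have q: "\<bar>f z - f x - ereal (inner (z - x) g)\<bar> / ereal (norm (z - x)) < ereal \<theta>"
          using dd[OF False] zn by (simp add: dist_norm)
        show ?thesis
        proof (cases "f z")
          case (real s)
          have "ereal (\<bar>s - r - inner (z - x) g\<bar> / norm (z - x)) < ereal \<theta>" using q real r n by simp
          hence "\<bar>s - r - inner (z - x) g\<bar> / norm (z - x) < \<theta>" by simp
          hence "\<bar>s - r - inner (z - x) g\<bar> < \<theta> * norm (z - x)" using n by (simp add: divide_less_eq)
          thus ?thesis using real r by simp
        next
          case PInf thus ?thesis using q r n by simp
        next
          case MInf thus ?thesis using q r n by simp
        qed
      qed
    qed
  qed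
qed

lemma FG_imp_hfg:
  assumes "FG f x g" shows "has_frechet_gradient f x g"
proof -
  from assms have fx: "\<bar>f x\<bar> \<noteq> \<infinity>" and H: "\<And>\<theta>. \<theta> > 0 \<Longrightarrow> \<exists>d>0. \<forall>z. norm (z - x) < d \<longrightarrow> \<bar>f z\<bar> \<noteq> \<infinity> \<and> \<bar>real_of_ereal (f z) - real_of_ereal (f x) - inner (z - x) g\<bar> \<le> \<theta> * norm (z - x)"
    unfolding FG_def by auto
  obtain r where r: "f x = ereal r" using fx by (cases "f x") auto
  show ?thesis unfolding has_frechet_gradient_def
  proof (intro conjI fx order_tendstoI)
    fix a :: ereal assume a: "a < 0"
    show "\<forall>\<^sub>F z in at x. a < \<bar>f z - f x - ereal (inner (z - x) g)\<bar> / ereal (norm (z - x))"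
      unfolding eventually_at
    proof (intro exI[of _ 1] conjI ballI impI)
      fix z assume "z \<in> UNIV" "z \<noteq> x \<and> dist z x < 1"
      hence n: "norm (z - x) > 0" by simp
      show "a < \<bar>f z - f x - ereal (inner (z - x) g)\<bar> / ereal (norm (z - x))"
      proof (cases "f z")
        case (real s)
        have "0 \<le> ereal (\<bar>s - r - inner (z - x) g\<bar> / norm (z - x))" by simp
        hence "a < ereal (\<bar>s - r - inner (z - x) g\<bar> / norm (z - x))" using a by (meson order_less_le_trans)
        thus ?thesis using real r n by simp
      qed (use a r n in auto)
    qed simp
  next
    fix a :: ereal assume a: "0 < a"
    obtain \<alpha> where al: "0 < ereal \<alpha>" "ereal \<alpha> < a" using ereal_dense2[OF a] by auto
    hence al0: "\<alpha> > 0" by simp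
    obtain d where d: "d > 0" and dd: "\<forall>z. norm (z - x) < d \<longrightarrow> \<bar>f z\<bar> \<noteq> \<infinity> \<and> \<bar>real_of_ereal (f z) - real_of_ereal (f x) - inner (z - x) g\<bar> \<le> \<alpha> * norm (z - x)"
      using H[OF al0] by auto
    show "\<forall>\<^sub>F z in at x. \<bar>f z - f x - ereal (inner (z - x) g)\<bar> / ereal (norm (z - x)) < a"
      unfolding eventually_at
    proof (intro exI[of _ d] conjI ballI impI d)
      fix z assume "z \<noteq> x \<and> dist z x < d"
      hence n: "norm (z - x) > 0" and zd: "norm (z - x) < d" by (auto simp: dist_norm)
      from dd zd have fz: "\<bar>f z\<bar> \<noteq> \<infinity>" and le: "\<bar>real_of_ereal (f z) - real_of_ereal (f x) - inner (z - x) g\<bar> \<le> \<alpha> * norm (z - x)" by auto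
      obtain s where s: "f z = ereal s" using fz by (cases "f z") auto
      have "\<bar>s - r - inner (z - x) g\<bar> / norm (z - x) \<le> \<alpha>" using le s r n by (simp add: divide_le_eq)
      hence "ereal (\<bar>s - r - inner (z - x) g\<bar> / norm (z - x)) < a" using al(2) by (meson ereal_less_eq(3) order_le_less_trans)
      thus "\<bar>f z - f x - ereal (inner (z - x) g)\<bar> / ereal (norm (z - x)) < a" using s r n by simp
    qed
  qed
qed

lemma lin_zero:
  fixes L :: "'a::real_normed_vector \<Rightarrow> real"
  assumes lin: "linear L" and sm: "\<And>\<theta>. \<theta> > 0 \<Longrightarrow> \<exists>e>0. \<forall>h. norm h < e \<longrightarrow> \<bar>L h\<bar> \<le> \<theta> * norm h"
  shows "L h = 0"
proof (rule ccontr)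
  assume ne: "L h \<noteq> 0"
  hence h0: "h \<noteq> 0" using linear_0[OF lin] by auto
  define \<theta> where "\<theta> = \<bar>L h\<bar> / (2 * norm h)"
  have th: "\<theta> > 0" using ne h0 by (simp add: \<theta>_def)
  obtain e where e: "e > 0" and he: "\<forall>h. norm h < e \<longrightarrow> \<bar>L h\<bar> \<le> \<theta> * norm h" using sm[OF th] by auto
  define t where "t = e / (2 * norm h)"
  have t: "t > 0" using e h0 by (simp add: t_def)
  have nt: "norm (t *\<^sub>R h) = t * norm h" using t by simp
  have "t * norm h = e / 2" using h0 by (simp add: t_def)
  hence "norm (t *\<^sub>R h) < e" using e nt by simp
  hence "\<bar>L (t *\<^sub>R h)\<bar> \<le> \<theta> * norm (t *\<^sub>R h)" using he by blast
  moreover have "L (t *\<^sub>R h) = t * L h" using linear_scale[OF lin] by simp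
  ultimately have "t * \<bar>L h\<bar> \<le> t * (\<theta> * norm h)" using t nt by (simp add: abs_mult mult_ac)
  hence "\<bar>L h\<bar> \<le> \<theta> * norm h" using t by simp
  also have "\<theta> * norm h = \<bar>L h\<bar> / 2" using h0 by (simp add: \<theta>_def)
  finally show False using ne by simp
qed

lemma linear_inner_left: "linear (\<lambda>h. inner h (v::'a::real_inner))"
  by (rule linearI) (auto simp: inner_add_left)

lemma FG_lin_eq:
  fixes L :: "'a::real_inner \<Rightarrow> real"
  assumes fg: "FG f x v" and lin: "linear L"
    and H: "\<And>\<theta>. \<theta> > 0 \<Longrightarrow> \<exists>d>0. \<forall>z. norm (z - x) < d \<longrightarrow> \<bar>real_of_ereal (f z) - real_of_ereal (f x) - L (z - x)\<bar> \<le> \<theta> * norm (z - x)"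
  shows "L h = inner h v"
proof -
  have lin2: "linear (\<lambda>h. L h - inner h v)"
    using lin linear_inner_left[of v] by (rule linear_compose_sub)
  have "L h - inner h v = 0"
  proof (rule lin_zero[OF lin2])
    fix \<theta> :: real assume th: "\<theta> > 0"
    obtain d1 where d1: "d1 > 0" "\<forall>z. norm (z - x) < d1 \<longrightarrow> \<bar>real_of_ereal (f z) - real_of_ereal (f x) - L (z - x)\<bar> \<le> \<theta>/2 * norm (z - x)"
      using H[of "\<theta>/2"] th by auto
    obtain d2 where d2: "d2 > 0" "\<forall>z. norm (z - x) < d2 \<longrightarrow> \<bar>f z\<bar> \<noteq> \<infinity> \<and> \<bar>real_of_ereal (f z) - real_of_ereal (f x) - inner (z - x) v\<bar> \<le> \<theta>/2 * norm (z - x)"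
      using fg th unfolding FG_def by (meson half_gt_zero)
    show "\<exists>e>0. \<forall>h. norm h < e \<longrightarrow> \<bar>L h - inner h v\<bar> \<le> \<theta> * norm h"
    proof (intro exI[of _ "min d1 d2"] conjI allI impI)
      show "min d1 d2 > 0" using d1 d2 by simp
      fix h :: 'a assume "norm h < min d1 d2"
      hence n1: "norm ((x + h) - x) < d1" and n2: "norm ((x + h) - x) < d2" by auto
      have a: "\<bar>real_of_ereal (f (x+h)) - real_of_ereal (f x) - L h\<bar> \<le> \<theta>/2 * norm h"
        using d1(2)[rule_format, OF n1] by simp
      have b: "\<bar>real_of_ereal (f (x+h)) - real_of_ereal (f x) - inner h v\<bar> \<le> \<theta>/2 * norm h"
        using d2(2)[rule_format, OF n2] by simp
      show "\<bar>L h - inner h v\<bar> \<le> \<theta> * norm h" using a b by linarith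
    qed
  qed
  thus ?thesis by simp
qed

lemma FG_unique: "FG f x g1 \<Longrightarrow> FG f x g2 \<Longrightarrow> g1 = g2"
proof -
  assume f1: "FG f x g1" and f2: "FG f x g2"
  have "inner h g2 = inner h g1" for h
  proof (rule FG_lin_eq[OF f1 linear_inner_left])
    fix \<theta> :: real assume "\<theta> > 0"
    thus "\<exists>d>0. \<forall>z. norm (z - x) < d \<longrightarrow> \<bar>real_of_ereal (f z) - real_of_ereal (f x) - inner (z - x) g2\<bar> \<le> \<theta> * norm (z - x)"
      using f2 unfolding FG_def by meson
  qed
  hence "inner (g1 - g2) (g1 - g2) = 0" by (simp add: inner_diff_right)
  thus ?thesis by simp
qed

lemma fd_iff: "frechet_differentiable f x \<longleftrightarrow> (\<exists>g. FG f x g)"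
  unfolding frechet_differentiable_def using hfg_imp_FG FG_imp_hfg by blast

lemma fgrad_eq: "FG f x g \<Longrightarrow> frechet_gradient f x = g"
  unfolding frechet_gradient_def
  by (rule the_equality) (auto intro: FG_imp_hfg dest: hfg_imp_FG FG_unique)



lemma FG_transfer:
  assumes fg: "FG f x v" and val: "g y0 = f x"
   and T: "\<And>z. g z = f (T z) \<and> norm (T z - x) = norm (z - y0) \<and> inner (T z - x) v = inner (z - y0) w"
  shows "FG g y0 w"
  unfolding FG_def
proof (intro conjI allI impI)
  show "\<bar>g y0\<bar> \<noteq> \<infinity>" using fg val by (simp add: FG_def)
  fix \<theta> :: real assume th: "\<theta> > 0"
  then obtain d where d: "d > 0" and dd: "\<forall>z. norm (z - x) < d \<longrightarrow> \<bar>f z\<bar> \<noteq> \<infinity> \<and>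
        \<bar>real_of_ereal (f z) - real_of_ereal (f x) - inner (z - x) v\<bar> \<le> \<theta> * norm (z - x)"
    using fg unfolding FG_def by meson
  show "\<exists>d>0. \<forall>z. norm (z - y0) < d \<longrightarrow> \<bar>g z\<bar> \<noteq> \<infinity> \<and>
        \<bar>real_of_ereal (g z) - real_of_ereal (g y0) - inner (z - y0) w\<bar> \<le> \<theta> * norm (z - y0)"
  proof (rule exI[of _ d], rule conjI[OF d], intro allI impI)
    fix z assume "norm (z - y0) < d"
    hence "norm (T z - x) < d" using T[of z] by simp
    thus "\<bar>g z\<bar> \<noteq> \<infinity> \<and> \<bar>real_of_ereal (g z) - real_of_ereal (g y0) - inner (z - y0) w\<bar> \<le> \<theta> * norm (z - y0)"
      using dd[rule_format, OF \<open>norm (T z - x) < d\<close>] T[of z] val by simp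
  qed
qed

lemma iso_inner:
  assumes "lin_isometry f" shows "inner (f a) (f b) = inner a b"
proof -
  have l: "linear f" and n: "\<And>x. norm (f x) = norm x" using assms unfolding lin_isometry_def by auto
  have "f a + f b = f (a + b)" using linear_add[OF l] by simp
  thus ?thesis using dot_norm[of "f a" "f b"] dot_norm[of a b] n by simp
qed

locale sdsys =
  fixes G :: "('s, 'm) monoid_scheme" and act :: "'s \<Rightarrow> 'x::euclidean_space \<Rightarrow> 'x"
    and gamma :: "'h::euclidean_space \<Rightarrow> 'x" and Lambda :: "'i \<Rightarrow> 'x \<Rightarrow> 'h" and A :: "'i set"
    and tau :: "'x \<Rightarrow> 'x"
  assumes grp: "group G"
    and act_one: "\<And>x. act \<one>\<^bsub>G\<^esub> x = x"
    and act_mult: "\<And>g h x. g \<in> carrier G \<Longrightarrow> h \<in> carrier G \<Longrightarrow> act (g \<otimes>\<^bsub>G\<^esub> h) x = act g (act h x)"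
    and act_iso: "\<And>g. g \<in> carrier G \<Longrightarrow> lin_isometry (act g)"
    and Lam_iso: "\<And>a. a \<in> A \<Longrightarrow> lin_isometry (Lambda a)"
    and tau_inv: "\<And>g x. g \<in> carrier G \<Longrightarrow> tau (act g x) = tau x"
    and tau_orb: "\<And>x. \<exists>g\<in>carrier G. tau x = act g x"
    and gam_Lam: "\<And>a x. a \<in> A \<Longrightarrow> gamma (Lambda a x) = tau x"
    and decomp: "\<And>X. \<exists>a\<in>A. X = Lambda a (gamma X)"
    and ineq: "\<And>X Y. inner X Y \<le> inner (gamma X) (gamma Y)"

lemma sds_ex:
  assumes "spectral_decomposition_system G act gamma Lambda A"
  shows "\<exists>tau. sdsys G act gamma Lambda A tau"
proof -
  obtain t where t1: "\<forall>g\<in>carrier G. \<forall>x. t (act g x) = t x"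
    and t2: "\<forall>x. t x \<in> {act g x | g. g \<in> carrier G}" and t3: "\<forall>a\<in>A. \<forall>x. gamma (Lambda a x) = t x"
    using assms unfolding spectral_decomposition_system_def by blast
  have t2': "\<forall>x. \<exists>g\<in>carrier G. t x = act g x" using t2 by auto
  have "sdsys G act gamma Lambda A t"
    unfolding sdsys_def using assms t1 t2' t3 unfolding spectral_decomposition_system_def by auto
  thus ?thesis by blast
qed

context sdsys
begin

lemma act_lin: "g \<in> carrier G \<Longrightarrow> linear (act g)"
  using act_iso unfolding lin_isometry_def by blast
lemma act_norm: "g \<in> carrier G \<Longrightarrow> norm (act g x) = norm x"
  using act_iso unfolding lin_isometry_def by blast
lemma act_inner: "g \<in> carrier G \<Longrightarrow> inner (act g a) (act g b) = inner a b"
  using act_iso iso_inner by blast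
lemma Lam_lin: "a \<in> A \<Longrightarrow> linear (Lambda a)"
  using Lam_iso unfolding lin_isometry_def by blast
lemma Lam_norm: "a \<in> A \<Longrightarrow> norm (Lambda a x) = norm x"
  using Lam_iso unfolding lin_isometry_def by blast
lemma Lam_inner: "a \<in> A \<Longrightarrow> inner (Lambda a u) (Lambda a v) = inner u v"
  using Lam_iso iso_inner by blast

lemma inv_cl: "g \<in> carrier G \<Longrightarrow> inv\<^bsub>G\<^esub> g \<in> carrier G"
  using group.inv_closed[OF grp] by blast
lemma act_inv1: "g \<in> carrier G \<Longrightarrow> act (inv\<^bsub>G\<^esub> g) (act g x) = x"
  using act_mult[OF inv_cl, of g g x] group.l_inv[OF grp, of g] act_one by simp
lemma act_inv2: "g \<in> carrier G \<Longrightarrow> act g (act (inv\<^bsub>G\<^esub> g) x) = x"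
  using act_mult[OF _ inv_cl, of g g x] group.r_inv[OF grp, of g] act_one by simp

lemma A_ne: "\<exists>a. a \<in> A"
  using decomp[of 0] by blast

lemma gamma_norm: "norm (gamma X) = norm X"
proof -
  obtain a where a: "a \<in> A" "X = Lambda a (gamma X)" using decomp by blast
  have "norm X = norm (Lambda a (gamma X))" using a(2) by simp
  also have "\<dots> = norm (gamma X)" using Lam_norm[OF a(1)] .
  finally show ?thesis by simp
qed

lemma gamma_lip: "norm (gamma X - gamma Y) \<le> norm (X - Y)"
proof -
  have "(norm (gamma X - gamma Y))^2 = (norm (gamma X))^2 + (norm (gamma Y))^2 - 2 * inner (gamma X) (gamma Y)"
    using dot_norm_neg[of "gamma X" "gamma Y"] by simp
  also have "\<dots> \<le> (norm X)^2 + (norm Y)^2 - 2 * inner X Y" using ineq[of X Y] gamma_norm by simp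
  also have "\<dots> = (norm (X - Y))^2" using dot_norm_neg[of X Y] by simp
  finally show ?thesis by (rule power2_le_imp_le) simp
qed

lemma tau_lip: "norm (tau z - tau q) \<le> norm (z - q)"
proof -
  obtain a where a: "a \<in> A" using A_ne by blast
  have "norm (tau z - tau q) = norm (gamma (Lambda a z) - gamma (Lambda a q))" using gam_Lam[OF a] by simp
  also have "\<dots> \<le> norm (Lambda a z - Lambda a q)" by (rule gamma_lip)
  also have "\<dots> = norm (z - q)" using Lam_norm[OF a] linear_diff[OF Lam_lin[OF a]] by metis
  finally show ?thesis .
qed

lemma tau_tau: "tau (tau z) = tau z"
  using tau_orb[of z] tau_inv by auto

lemma phi_tau: "S_invariant G act \<phi> \<Longrightarrow> \<phi> (tau z) = \<phi> z"
  using tau_orb[of z] unfolding S_invariant_def by auto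

lemma FG_act:
  assumes inv: "S_invariant G act \<phi>" and g: "g \<in> carrier G" and fg: "FG \<phi> x v"
  shows "FG \<phi> (act g x) (act g v)"
proof (rule FG_transfer[OF fg, where T = "act (inv\<^bsub>G\<^esub> g)"])
  let ?h = "inv\<^bsub>G\<^esub> g"
  have h: "?h \<in> carrier G" using inv_cl[OF g] .
  show "\<phi> (act g x) = \<phi> x" using inv g unfolding S_invariant_def by auto
  fix z
  have e: "act g (act ?h z - x) = z - act g x"
    using linear_diff[OF act_lin[OF g]] act_inv2[OF g] by simp
  have "norm (act ?h z - x) = norm (z - act g x)" using act_norm[OF g, of "act ?h z - x"] e by simp
  moreover have "inner (act ?h z - x) v = inner (z - act g x) (act g v)"
    using act_inner[OF g, of "act ?h z - x" v] e by simp
  moreover have "\<phi> z = \<phi> (act ?h z)" using inv h unfolding S_invariant_def by auto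
  ultimately show "\<phi> z = \<phi> (act ?h z) \<and> norm (act ?h z - x) = norm (z - act g x) \<and>
      inner (act ?h z - x) v = inner (z - act g x) (act g v)" by simp
qed

lemma pullback:
  assumes inv: "S_invariant G act \<phi>" and a: "a \<in> A" and fg: "FG (\<phi> \<circ> gamma) (Lambda a x) W"
  shows "FG \<phi> x (adjoint (Lambda a) W)"
proof (rule FG_transfer[OF fg, where T = "Lambda a"])
  show "\<phi> x = (\<phi> \<circ> gamma) (Lambda a x)" using gam_Lam[OF a] phi_tau[OF inv] by simp
  fix z
  have e: "Lambda a z - Lambda a x = Lambda a (z - x)" using linear_diff[OF Lam_lin[OF a]] by simp
  show "\<phi> z = (\<phi> \<circ> gamma) (Lambda a z) \<and> norm (Lambda a z - Lambda a x) = norm (z - x) \<and>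
      inner (Lambda a z - Lambda a x) W = inner (z - x) (adjoint (Lambda a) W)"
    using gam_Lam[OF a] phi_tau[OF inv] e Lam_norm[OF a] adjoint_works[OF Lam_lin[OF a]] by simp
qed

end


context sdsys
begin

definition Hcond :: "'x \<Rightarrow> 'x \<Rightarrow> bool" where
  "Hcond y w \<longleftrightarrow> (\<forall>\<eta>>0. \<exists>\<rho>>0. \<forall>g\<in>carrier G. norm (act g y - y) < \<rho> \<longrightarrow>
      \<bar>inner y (act g w - w)\<bar> \<le> \<eta> * norm (act g y - y) \<and> norm (act g w - w) \<le> \<eta>)"

lemma Hcond_neg: "Hcond y w \<Longrightarrow> Hcond y (- w)"
proof -
  assume H: "Hcond y w"
  have "act g (- w) - - w = - (act g w - w)" if "g \<in> carrier G" for g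
    using linear_neg[OF act_lin[OF that]] by simp
  thus ?thesis using H unfolding Hcond_def
    by (metis (no_types, lifting) abs_minus_cancel inner_minus_right norm_minus_cancel)
qed

lemma H_from_FG:
  assumes inv: "S_invariant G act \<phi>" and fg: "FG \<phi> y w"
  shows "Hcond y w"
  unfolding Hcond_def
proof (intro allI impI)
  fix \<eta> :: real assume eta: "\<eta> > 0"
  define \<theta> where "\<theta> = \<eta> / 6"
  have th: "\<theta> > 0" using eta by (simp add: \<theta>_def)
  obtain d where d: "d > 0" and dd: "\<forall>z. norm (z - y) < d \<longrightarrow> \<bar>\<phi> z\<bar> \<noteq> \<infinity> \<and>
        \<bar>real_of_ereal (\<phi> z) - real_of_ereal (\<phi> y) - inner (z - y) w\<bar> \<le> \<theta> * norm (z - y)"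
    using fg th unfolding FG_def by meson
  show "\<exists>\<rho>>0. \<forall>g\<in>carrier G. norm (act g y - y) < \<rho> \<longrightarrow>
      \<bar>inner y (act g w - w)\<bar> \<le> \<eta> * norm (act g y - y) \<and> norm (act g w - w) \<le> \<eta>"
  proof (rule exI[of _ "d/2"], intro conjI ballI impI)
    show "d/2 > 0" using d by simp
    fix g assume g: "g \<in> carrier G" and m: "norm (act g y - y) < d/2"
    define h where "h = inv\<^bsub>G\<^esub> g"
    have hG: "h \<in> carrier G" using inv_cl[OF g] by (simp add: h_def)
    define u where "u = act h y - y"
    have au: "act g u = y - act g y"
      unfolding u_def h_def using linear_diff[OF act_lin[OF g]] act_inv2[OF g] by simp
    have nu: "norm u = norm (act g y - y)"
      using act_norm[OF g, of u] au by (simp add: norm_minus_commute)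
    have iu: "inner y (act g w - w) = inner u w"
    proof -
      have "inner y (act g w) = inner (act h y) w"
        using act_inner[OF g, of "act h y" w] act_inv2[OF g, of y] by (simp add: h_def)
      thus ?thesis by (simp add: u_def inner_diff_left inner_diff_right)
    qed
    have phih: "\<And>z. \<phi> (act h z) = \<phi> z" using inv hG unfolding S_invariant_def by auto
    have p1: "\<bar>inner u w\<bar> \<le> \<theta> * norm u"
    proof -
      have "norm (act h y - y) < d" using nu m norm_ge_zero[of "act g y - y"] unfolding u_def by linarith
      from dd[rule_format, OF this] show ?thesis using phih[of y] by (simp add: u_def)
    qed
    show "\<bar>inner y (act g w - w)\<bar> \<le> \<eta> * norm (act g y - y)"
      using p1 iu nu th eta by (simp add: \<theta>_def)
    show "norm (act g w - w) \<le> \<eta>"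
    proof (cases "act g w - w = 0")
      case True thus ?thesis using eta by simp
    next
      case False
      define v where "v = act g w - w"
      have nv: "norm v > 0" using False by (simp add: v_def)
      define r where "r = d / 4"
      have r: "r > 0" using d by (simp add: r_def)
      define k where "k = (r / norm v) *\<^sub>R v"
      have nk: "norm k = r" using nv r by (simp add: k_def)
      have ikv: "inner k v = r * norm v"
        using nv by (simp add: k_def power2_norm_eq_inner[symmetric] power2_eq_square)
      have A1: "\<bar>real_of_ereal (\<phi> (y + k)) - real_of_ereal (\<phi> y) - inner k w\<bar> \<le> \<theta> * r"
      proof -
        have "norm ((y + k) - y) < d" using nk r by (simp add: r_def)
        from dd[rule_format, OF this] show ?thesis using nk by simp
      qed
      have ek: "act h (y + k) - y = act h k + u"
        using linear_add[OF act_lin[OF hG]] by (simp add: u_def)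
      have nhk: "norm (act h k) = r" using act_norm[OF hG] nk by simp
      have nle: "norm (act h (y + k) - y) \<le> r + norm u"
        using ek nhk norm_triangle_ineq[of "act h k" u] by simp
      have A2: "\<bar>real_of_ereal (\<phi> (y + k)) - real_of_ereal (\<phi> y) - inner (act h k + u) w\<bar> \<le> \<theta> * (r + norm u)"
      proof -
        have "norm (act h (y + k) - y) < d" using nle nu m d unfolding r_def by linarith
        from dd[rule_format, OF this] have "\<bar>real_of_ereal (\<phi> (act h (y + k))) - real_of_ereal (\<phi> y) - inner (act h (y + k) - y) w\<bar> \<le> \<theta> * norm (act h (y + k) - y)" by simp
        moreover have "\<theta> * norm (act h (y + k) - y) \<le> \<theta> * (r + norm u)" using nle th by simp
        ultimately show ?thesis using phih ek by simp
      qed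
      have ihk: "inner (act h k) w = inner k (act g w)"
        using act_inner[OF g, of "act h k" w] act_inv2[OF g, of k] by (simp add: h_def)
      have "inner (act h k + u) w - inner k w = inner k v + inner u w"
        using ihk by (simp add: inner_add_left v_def inner_diff_right)
      hence "\<bar>inner k v + inner u w\<bar> \<le> \<theta> * r + \<theta> * (r + norm u)" using A1 A2 by linarith
      hence "r * norm v \<le> \<theta> * r + \<theta> * (r + norm u) + \<theta> * norm u" using ikv p1 by linarith
      also have "\<dots> \<le> \<theta> * r + \<theta> * (r + 2 * r) + \<theta> * (2 * r)"
      proof -
        have nu2: "norm u \<le> 2 * r" using nu m by (simp add: r_def)
        show ?thesis using mult_left_mono[OF nu2, of \<theta>] th by (simp add: algebra_simps)
      qed
      also have "\<dots> = r * \<eta>" by (simp add: \<theta>_def algebra_simps)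
      finally have "r * norm v \<le> r * \<eta>" .
      thus ?thesis using r by (simp add: v_def)
    qed
  qed
qed

end


context sdsys
begin

lemma core:
  assumes c: "c \<in> A" and ty: "tau y = y" and H: "Hcond y w" and th: "\<theta> > 0"
  shows "\<exists>d>0. \<forall>Y. norm (Y - Lambda c y) < d \<longrightarrow>
    inner (Y - Lambda c y) (Lambda c w) - inner (gamma Y - y) w \<le> \<theta> * norm (Y - Lambda c y)"
proof -
  define K where "K = 4 / \<theta>"
  define \<eta> where "\<eta> = \<theta> / 4"
  have K: "K > 0" and eta: "\<eta> > 0" and Keta: "K * \<eta> = 1" using th by (auto simp: K_def \<eta>_def)
  obtain \<rho> where rho: "\<rho> > 0" and Hr: "\<forall>g\<in>carrier G. norm (act g y - y) < \<rho> \<longrightarrow>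
      \<bar>inner y (act g w - w)\<bar> \<le> \<eta> * norm (act g y - y) \<and> norm (act g w - w) \<le> \<eta>"
    using H eta unfolding Hcond_def by meson
  define d where "d = \<rho> / (2 * K * norm w + 1)"
  have pos: "2 * K * norm w + 1 > 0" proof -
    have "0 \<le> 2 * K * norm w" using K by simp
    thus ?thesis by linarith
  qed
  have d: "d > 0" using rho pos by (simp add: d_def)
  let ?X0 = "Lambda c y"
  have gX0: "gamma ?X0 = y" using gam_Lam[OF c] ty by simp
  show ?thesis
  proof (rule exI[of _ d], rule conjI[OF d], intro allI impI)
    fix Y assume Yd: "norm (Y - ?X0) < d"
    define \<delta> where "\<delta> = norm (Y - ?X0)"
    show "inner (Y - ?X0) (Lambda c w) - inner (gamma Y - y) w \<le> \<theta> * norm (Y - ?X0)"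
    proof (cases "\<delta> = 0")
      case True
      hence "Y = ?X0" by (simp add: \<delta>_def)
      thus ?thesis using gX0 by simp
    next
      case False
      hence dl: "\<delta> > 0" by (simp add: \<delta>_def)
      define \<epsilon> where "\<epsilon> = K * \<delta>"
      have ep: "\<epsilon> > 0" using K dl by (simp add: \<epsilon>_def)
      have epeta: "\<epsilon> * \<eta> = \<delta>" using Keta by (simp add: \<epsilon>_def algebra_simps)
      define q where "q = y + \<epsilon> *\<^sub>R w"
      obtain g where g: "g \<in> carrier G" and tq: "tau q = act g q" using tau_orb by blast
      define e where "e = gamma Y - y"
      have ne: "norm e \<le> \<delta>" using gamma_lip[of Y ?X0] gX0 by (simp add: e_def \<delta>_def)
      have C: "inner Y (Lambda c q) \<le> inner (gamma Y) (tau q)"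
        using ineq[of Y "Lambda c q"] gam_Lam[OF c] by simp
      have Lq: "Lambda c q = ?X0 + \<epsilon> *\<^sub>R Lambda c w"
        using linear_add[OF Lam_lin[OF c]] linear_scale[OF Lam_lin[OF c]] by (simp add: q_def)
      have tq2: "tau q = act g y + \<epsilon> *\<^sub>R act g w"
        using tq linear_add[OF act_lin[OF g]] linear_scale[OF act_lin[OF g]] by (simp add: q_def)
      define m where "m = norm (act g y - y)"
      have mb: "m \<le> 2 * \<epsilon> * norm w"
      proof -
        have "act g y - y = (tau q - y) - \<epsilon> *\<^sub>R act g w" using tq2 by simp
        hence "m \<le> norm (tau q - y) + norm (\<epsilon> *\<^sub>R act g w)"
          unfolding m_def by (metis norm_triangle_ineq4)
        also have "norm (tau q - y) \<le> norm (q - y)" using tau_lip[of q y] ty by simp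
        also have "norm (q - y) = \<epsilon> * norm w" using ep by (simp add: q_def)
        also have "norm (\<epsilon> *\<^sub>R act g w) = \<epsilon> * norm w" using ep act_norm[OF g] by simp
        finally show ?thesis by simp
      qed
      have mr: "m < \<rho>"
      proof -
        have "2 * \<epsilon> * norm w \<le> (2 * K * norm w + 1) * \<delta>" using dl by (simp add: \<epsilon>_def algebra_simps)
        also have "\<dots> < (2 * K * norm w + 1) * d" using pos Yd by (simp add: \<delta>_def)
        also have "\<dots> = \<rho>" using pos by (simp add: d_def)
        finally show ?thesis using mb by simp
      qed
      have B3: "\<bar>inner y (act g w - w)\<bar> \<le> \<eta> * m" and nsw: "norm (act g w - w) \<le> \<eta>"
        using Hr g mr by (auto simp: m_def)
      have B1: "inner e (act g y - y) \<le> \<delta> * m"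
        using norm_cauchy_schwarz[of e "act g y - y"] ne mult_right_mono[OF ne, of m] by (simp add: m_def)
      have B2: "inner e (act g w - w) \<le> \<delta> * \<eta>"
        using norm_cauchy_schwarz[of e "act g w - w"] mult_mono[OF ne nsw] dl by simp
      have E1: "inner Y (Lambda c q) = inner Y ?X0 + \<epsilon> * inner Y (Lambda c w)"
        using Lq by (simp add: inner_add_right)
      have E2: "inner (gamma Y) (tau q) = inner (gamma Y) (act g y) + \<epsilon> * inner (gamma Y) (act g w)"
        using tq2 by (simp add: inner_add_right)
      have E3: "2 * inner Y ?X0 = (norm Y)^2 + (norm ?X0)^2 - \<delta>^2"
        using dot_norm_neg[of Y ?X0] by (simp add: \<delta>_def)
      have gY: "gamma Y = y + e" by (simp add: e_def)
      have E4: "(norm Y)^2 = (norm y)^2 + 2 * inner y e + (norm e)^2"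
      proof -
        have "(norm Y)^2 = (norm (y + e))^2" using gamma_norm[of Y] gY by simp
        thus ?thesis by (simp add: power2_norm_eq_inner inner_add_left inner_add_right inner_commute)
      qed
      have E5: "norm ?X0 = norm y" using Lam_norm[OF c] by simp
      have E6: "2 * inner y (act g y) = 2 * (norm y)^2 - m^2"
        using dot_norm_neg[of y "act g y"] act_norm[OF g, of y] by (simp add: m_def norm_minus_commute)
      have E7: "inner (gamma Y) (act g y) = inner y (act g y) + inner e (act g y - y) + inner y e"
        using gY by (simp add: inner_add_left inner_diff_right inner_commute)
      have E8: "\<epsilon> * inner (gamma Y) (act g w) = \<epsilon> * inner y w + \<epsilon> * inner y (act g w - w)
          + \<epsilon> * inner e w + \<epsilon> * inner e (act g w - w)"
        using gY by (simp add: inner_add_left inner_diff_right algebra_simps)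
      have E9: "inner ?X0 (Lambda c w) = inner y w" using Lam_inner[OF c] by simp
      have T: "inner (Y - ?X0) (Lambda c w) - inner (gamma Y - y) w = inner Y (Lambda c w) - inner y w - inner e w"
        using E9 by (simp add: inner_diff_left e_def)
      have P1: "\<epsilon> * inner y (act g w - w) \<le> \<delta> * m"
      proof -
        have "\<epsilon> * inner y (act g w - w) \<le> \<epsilon> * (\<eta> * m)" using B3 ep by (simp add: abs_le_iff)
        thus ?thesis using epeta by (simp add: mult.assoc[symmetric])
      qed
      have P2: "\<epsilon> * inner e (act g w - w) \<le> \<delta> * \<delta>"
      proof -
        have "\<epsilon> * inner e (act g w - w) \<le> \<epsilon> * (\<delta> * \<eta>)" using B2 ep by simp
        thus ?thesis using epeta by (simp add: algebra_simps)
      qed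
      have sq: "m^2 - 4 * (\<delta> * m) + 4 * \<delta>^2 \<ge> 0"
      proof -
        have "0 \<le> (m - 2 * \<delta>)^2" by simp
        thus ?thesis by (simp add: power2_eq_square algebra_simps)
      qed
      have X02: "(norm ?X0)^2 = (norm y)^2" using E5 by simp
      have ne2: "(norm e)^2 \<ge> 0" by simp
      have dist: "\<epsilon> * (inner Y (Lambda c w) - inner y w - inner e w) =
          \<epsilon> * inner Y (Lambda c w) - \<epsilon> * inner y w - \<epsilon> * inner e w"
        by (simp add: algebra_simps)
      have P2': "\<epsilon> * inner e (act g w - w) \<le> \<delta>^2" using P2 by (simp add: power2_eq_square)
      have main0: "2 * (\<epsilon> * (inner Y (Lambda c w) - inner y w - inner e w)) \<le> 7 * \<delta>^2"
        using C E1 E2 E3 E4 X02 E6 E7 E8 B1 P1 P2' sq ne2 dist by linarith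
      hence main: "\<epsilon> * (inner Y (Lambda c w) - inner y w - inner e w) \<le> 7/2 * \<delta>^2" by simp
      hence "K * \<delta> * (inner Y (Lambda c w) - inner y w - inner e w) \<le> 7/2 * \<delta> * \<delta>"
        by (simp add: \<epsilon>_def power2_eq_square)
      hence "K * (inner Y (Lambda c w) - inner y w - inner e w) \<le> 7/2 * \<delta>"
        using dl by (simp add: mult.assoc mult.left_commute[of \<delta>])
      hence "4 * (inner Y (Lambda c w) - inner y w - inner e w) \<le> 7/2 * \<delta> * \<theta>"
        using th by (simp add: K_def field_simps)
      moreover have "0 \<le> \<delta> * \<theta>" using dl th by simp
      ultimately show ?thesis using T by (simp add: \<delta>_def algebra_simps)
    qed
  qed
qed

end


context sdsys
begin

lemma core_abs:
  assumes c: "c \<in> A" and ty: "tau y = y" and H: "Hcond y w" and th: "\<theta> > 0"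
  shows "\<exists>d>0. \<forall>Y. norm (Y - Lambda c y) < d \<longrightarrow>
    \<bar>inner (Y - Lambda c y) (Lambda c w) - inner (gamma Y - y) w\<bar> \<le> \<theta> * norm (Y - Lambda c y)"
proof -
  obtain d1 where d1: "d1 > 0" "\<forall>Y. norm (Y - Lambda c y) < d1 \<longrightarrow>
    inner (Y - Lambda c y) (Lambda c w) - inner (gamma Y - y) w \<le> \<theta> * norm (Y - Lambda c y)"
    using core[OF c ty H th] by blast
  obtain d2 where d2: "d2 > 0" "\<forall>Y. norm (Y - Lambda c y) < d2 \<longrightarrow>
    inner (Y - Lambda c y) (Lambda c (- w)) - inner (gamma Y - y) (- w) \<le> \<theta> * norm (Y - Lambda c y)"
    using core[OF c ty Hcond_neg[OF H] th] by blast
  have ln: "Lambda c (- w) = - Lambda c w" using linear_neg[OF Lam_lin[OF c]] by simp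
  show ?thesis
  proof (rule exI[of _ "min d1 d2"], rule conjI, simp add: d1 d2, intro allI impI)
    fix Y assume "norm (Y - Lambda c y) < min d1 d2"
    hence "norm (Y - Lambda c y) < d1" "norm (Y - Lambda c y) < d2" by auto
    thus "\<bar>inner (Y - Lambda c y) (Lambda c w) - inner (gamma Y - y) w\<bar> \<le> \<theta> * norm (Y - Lambda c y)"
      using d1(2) d2(2) ln by (auto simp: abs_le_iff)
  qed
qed

lemma main_fwd:
  assumes inv: "S_invariant G act \<phi>" and fg: "FG \<phi> y w" and ty: "tau y = y" and c: "c \<in> A"
  shows "FG (\<phi> \<circ> gamma) (Lambda c y) (Lambda c w)"
proof -
  have gX0: "gamma (Lambda c y) = y" using gam_Lam[OF c] ty by simp
  have fy: "\<bar>\<phi> y\<bar> \<noteq> \<infinity>" using fg by (simp add: FG_def)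
  have H: "Hcond y w" using H_from_FG[OF inv fg] .
  show ?thesis unfolding FG_def
  proof (intro conjI allI impI)
    show "\<bar>(\<phi> \<circ> gamma) (Lambda c y)\<bar> \<noteq> \<infinity>" using fy gX0 by simp
    fix \<theta> :: real assume th: "\<theta> > 0"
    obtain d1 where d1: "d1 > 0" and dd1: "\<forall>z. norm (z - y) < d1 \<longrightarrow> \<bar>\<phi> z\<bar> \<noteq> \<infinity> \<and>
        \<bar>real_of_ereal (\<phi> z) - real_of_ereal (\<phi> y) - inner (z - y) w\<bar> \<le> \<theta>/2 * norm (z - y)"
      using fg th unfolding FG_def by (meson half_gt_zero)
    obtain d2 where d2: "d2 > 0" and dd2: "\<forall>Y. norm (Y - Lambda c y) < d2 \<longrightarrow>
      \<bar>inner (Y - Lambda c y) (Lambda c w) - inner (gamma Y - y) w\<bar> \<le> \<theta>/2 * norm (Y - Lambda c y)"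
      using core_abs[OF c ty H, of "\<theta>/2"] th by auto
    show "\<exists>d>0. \<forall>z. norm (z - Lambda c y) < d \<longrightarrow> \<bar>(\<phi> \<circ> gamma) z\<bar> \<noteq> \<infinity> \<and>
        \<bar>real_of_ereal ((\<phi> \<circ> gamma) z) - real_of_ereal ((\<phi> \<circ> gamma) (Lambda c y)) - inner (z - Lambda c y) (Lambda c w)\<bar>
        \<le> \<theta> * norm (z - Lambda c y)"
    proof (rule exI[of _ "min d1 d2"], rule conjI, simp add: d1 d2, intro allI impI)
      fix Y assume Yd: "norm (Y - Lambda c y) < min d1 d2"
      have gl: "norm (gamma Y - y) \<le> norm (Y - Lambda c y)" using gamma_lip[of Y "Lambda c y"] gX0 by simp
      hence "norm (gamma Y - y) < d1" using Yd by simp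
      from dd1[rule_format, OF this] have f1: "\<bar>\<phi> (gamma Y)\<bar> \<noteq> \<infinity>"
        and f2: "\<bar>real_of_ereal (\<phi> (gamma Y)) - real_of_ereal (\<phi> y) - inner (gamma Y - y) w\<bar> \<le> \<theta>/2 * norm (gamma Y - y)"
        by auto
      have f3: "\<theta>/2 * norm (gamma Y - y) \<le> \<theta>/2 * norm (Y - Lambda c y)" using gl th by simp
      have f4: "\<bar>inner (Y - Lambda c y) (Lambda c w) - inner (gamma Y - y) w\<bar> \<le> \<theta>/2 * norm (Y - Lambda c y)"
        using dd2 Yd by simp
      show "\<bar>(\<phi> \<circ> gamma) Y\<bar> \<noteq> \<infinity> \<and>
        \<bar>real_of_ereal ((\<phi> \<circ> gamma) Y) - real_of_ereal ((\<phi> \<circ> gamma) (Lambda c y)) - inner (Y - Lambda c y) (Lambda c w)\<bar>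
        \<le> \<theta> * norm (Y - Lambda c y)"
      proof -
        let ?P = "real_of_ereal (\<phi> (gamma Y)) - real_of_ereal (\<phi> y) - inner (gamma Y - y) w"
        let ?Q = "inner (Y - Lambda c y) (Lambda c w) - inner (gamma Y - y) w"
        have eq: "?P - ?Q = real_of_ereal (\<phi> (gamma Y)) - real_of_ereal (\<phi> y) - inner (Y - Lambda c y) (Lambda c w)"
          by simp
        have "\<bar>?P - ?Q\<bar> \<le> \<bar>?P\<bar> + \<bar>?Q\<bar>" by (rule abs_triangle_ineq4)
        hence "\<bar>real_of_ereal (\<phi> (gamma Y)) - real_of_ereal (\<phi> y) - inner (Y - Lambda c y) (Lambda c w)\<bar>
           \<le> \<bar>?P\<bar> + \<bar>?Q\<bar>" by (simp only: eq)
        hence "\<bar>real_of_ereal (\<phi> (gamma Y)) - real_of_ereal (\<phi> y) - inner (Y - Lambda c y) (Lambda c w)\<bar>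
           \<le> \<theta> * norm (Y - Lambda c y)" using f2 f3 f4 by linarith
        thus ?thesis using f1 gX0 by simp
      qed
    qed
  qed
qed

lemma partI:
  assumes inv: "S_invariant G act \<phi>" and a: "a \<in> A" and fg: "FG \<phi> x v"
  shows "FG (\<phi> \<circ> gamma) (Lambda a x) (Lambda a v)"
proof -
  obtain g where g: "g \<in> carrier G" and tx: "tau x = act g x" using tau_orb by blast
  define y where "y = tau x"
  have fy: "FG \<phi> y (act g v)" using FG_act[OF inv g fg] tx by (simp add: y_def)
  have ty: "tau y = y" using tau_tau by (simp add: y_def)
  obtain c where c: "c \<in> A" and ce: "Lambda a x = Lambda c (gamma (Lambda a x))" using decomp by blast
  have X0: "Lambda a x = Lambda c y" using ce gam_Lam[OF a] by (simp add: y_def)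
  define W where "W = Lambda c (act g v)"
  have fW: "FG (\<phi> \<circ> gamma) (Lambda a x) W"
    using main_fwd[OF inv fy ty c] X0 by (simp add: W_def)
  have adj: "adjoint (Lambda a) W = v"
    using FG_unique[OF pullback[OF inv a fW] fg] .
  have i1: "inner (Lambda a v) W = inner v v"
    using adjoint_works[OF Lam_lin[OF a], of v W] adj by simp
  have nW: "norm W = norm v" using Lam_norm[OF c] act_norm[OF g] by (simp add: W_def)
  have "inner (W - Lambda a v) (W - Lambda a v) = inner W W - 2 * inner (Lambda a v) W + inner (Lambda a v) (Lambda a v)"
    by (simp add: inner_diff_left inner_diff_right inner_commute)
  also have "\<dots> = 0" using i1 nW Lam_inner[OF a, of v v]
    by (simp add: power2_norm_eq_inner[symmetric])
  finally have "W = Lambda a v" by simp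
  thus ?thesis using fW by simp
qed

end

theorem corollary4p8:
  fixes G :: "('s, 'm) monoid_scheme" and act :: "'s \<Rightarrow> 'x::euclidean_space \<Rightarrow> 'x"
    and gamma :: "'h::euclidean_space \<Rightarrow> 'x" and Lambda :: "'i \<Rightarrow> 'x \<Rightarrow> 'h" and A :: "'i set"
    and \<phi> :: "'x \<Rightarrow> ereal"
  assumes sds: "spectral_decomposition_system G act gamma Lambda A"
    and closed_Lambda: "closed ((\<lambda>a. Blinfun (Lambda a)) ` A)"
    and inv: "S_invariant G act \<phi>"
  shows "(\<forall>x. \<forall>a\<in>A. \<bar>\<phi> x\<bar> \<noteq> \<infinity> \<longrightarrow>
            ((frechet_differentiable (\<phi> \<circ> gamma) (Lambda a x) \<longleftrightarrow> frechet_differentiable \<phi> x) \<and>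
             (frechet_differentiable \<phi> x \<longrightarrow>
                frechet_gradient (\<phi> \<circ> gamma) (Lambda a x) = Lambda a (frechet_gradient \<phi> x))))
       \<and> (\<forall>X. \<bar>\<phi> (gamma X)\<bar> \<noteq> \<infinity> \<longrightarrow>
            ((frechet_differentiable (\<phi> \<circ> gamma) X \<longleftrightarrow> frechet_differentiable \<phi> (gamma X)) \<and>
             (frechet_differentiable \<phi> (gamma X) \<longrightarrow>
                (\<forall>a\<in>spectral_index_set gamma Lambda A X.
                   frechet_gradient (\<phi> \<circ> gamma) X = Lambda a (frechet_gradient \<phi> (gamma X))))))"
proof -
  obtain tau where S: "sdsys G act gamma Lambda A tau" using sds_ex[OF sds] by blast
  interpret sdsys G act gamma Lambda A tau by (rule S)
  have I: "(frechet_differentiable (\<phi> \<circ> gamma) (Lambda a x) \<longleftrightarrow> frechet_differentiable \<phi> x) \<and>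
             (frechet_differentiable \<phi> x \<longrightarrow>
                frechet_gradient (\<phi> \<circ> gamma) (Lambda a x) = Lambda a (frechet_gradient \<phi> x))"
    if a: "a \<in> A" for a x
  proof -
    have 1: "frechet_differentiable \<phi> x" if "frechet_differentiable (\<phi> \<circ> gamma) (Lambda a x)"
      using that pullback[OF inv a] by (auto simp: fd_iff)
    have 2: "FG (\<phi> \<circ> gamma) (Lambda a x) (Lambda a v)" if "FG \<phi> x v" for v
      using partI[OF inv a that] .
    show ?thesis
    proof (intro conjI impI iffI)
      assume "frechet_differentiable \<phi> x"
      then obtain v where v: "FG \<phi> x v" by (auto simp: fd_iff)
      thus "frechet_differentiable (\<phi> \<circ> gamma) (Lambda a x)" using 2 by (auto simp: fd_iff)
      show "frechet_gradient (\<phi> \<circ> gamma) (Lambda a x) = Lambda a (frechet_gradient \<phi> x)"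
        using fgrad_eq[OF 2[OF v]] fgrad_eq[OF v] by simp
    qed (rule 1)
  qed
  show ?thesis
  proof (rule conjI)
    show "\<forall>x. \<forall>a\<in>A. \<bar>\<phi> x\<bar> \<noteq> \<infinity> \<longrightarrow>
            ((frechet_differentiable (\<phi> \<circ> gamma) (Lambda a x) \<longleftrightarrow> frechet_differentiable \<phi> x) \<and>
             (frechet_differentiable \<phi> x \<longrightarrow>
                frechet_gradient (\<phi> \<circ> gamma) (Lambda a x) = Lambda a (frechet_gradient \<phi> x)))"
      using I by blast
    show "\<forall>X. \<bar>\<phi> (gamma X)\<bar> \<noteq> \<infinity> \<longrightarrow>
            ((frechet_differentiable (\<phi> \<circ> gamma) X \<longleftrightarrow> frechet_differentiable \<phi> (gamma X)) \<and>
             (frechet_differentiable \<phi> (gamma X) \<longrightarrow>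
                (\<forall>a\<in>spectral_index_set gamma Lambda A X.
                   frechet_gradient (\<phi> \<circ> gamma) X = Lambda a (frechet_gradient \<phi> (gamma X)))))"
    proof (intro allI impI)
      fix X
      obtain a0 where a0: "a0 \<in> A" and a0e: "X = Lambda a0 (gamma X)" using decomp by blast
      have e0: "Lambda a0 (gamma X) = X" using a0e by (rule sym)
      have d: "frechet_differentiable (\<phi> \<circ> gamma) X \<longleftrightarrow> frechet_differentiable \<phi> (gamma X)"
        using I[OF a0, of "gamma X"] unfolding e0 by blast
      have g: "frechet_differentiable \<phi> (gamma X) \<longrightarrow>
                (\<forall>a\<in>spectral_index_set gamma Lambda A X.
                   frechet_gradient (\<phi> \<circ> gamma) X = Lambda a (frechet_gradient \<phi> (gamma X)))"
      proof (intro impI ballI)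
        fix a assume fd: "frechet_differentiable \<phi> (gamma X)" and a: "a \<in> spectral_index_set gamma Lambda A X"
        hence aA: "a \<in> A" and ae: "X = Lambda a (gamma X)" by (auto simp: spectral_index_set_def)
        have e: "Lambda a (gamma X) = X" using ae by (rule sym)
        show "frechet_gradient (\<phi> \<circ> gamma) X = Lambda a (frechet_gradient \<phi> (gamma X))"
          using I[OF aA, of "gamma X"] fd unfolding e by blast
      qed
      show "(frechet_differentiable (\<phi> \<circ> gamma) X \<longleftrightarrow> frechet_differentiable \<phi> (gamma X)) \<and>
             (frechet_differentiable \<phi> (gamma X) \<longrightarrow>
                (\<forall>a\<in>spectral_index_set gamma Lambda A X.
                   frechet_gradient (\<phi> \<circ> gamma) X = Lambda a (frechet_gradient \<phi> (gamma X))))"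
        using d g by blast
    qed
  qed
qed


end
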